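(* For every formula $A$ of $\mathbf{L_1}$: $\dashv_H A$ if and only if $\dashv_T A$.
   Context: Formulas of $\mathbf{L_1}$: built from atomic formulas $\epsilon ab$ ($a,b$ name variables, possibly equal) with primitive connectives $\vee,\sim$; $\wedge,\supset,\equiv$ defined as usual. Disjunctions may be associated in any way. $\vdash_H A$: $A$ belongs to the smallest set containing all instances of classical propositional tautologies and all formulas $\epsilon ab\supset\epsilon aa$, $(\epsilon ab\wedge\epsilon bc)\supset\epsilon ac$, $(\epsilon ab\wedge\epsilon bb)\supset\epsilon ba$, closed under modus ponens. Positive/negative parts (occurrences): $A$ is a positive part of $A$; if $B\vee C$ is a positive part then $B,C$ are positive parts; if $\sim B$ is a positive part then $B$ is a negative part; if $\sim B$ is a negative part then $B$ is a positive part. $F[B_+]$ ($G[B_-]$) denotes a formula with a specified occurrence of $B$ as positive (negative) part; $F[B_+,C_-]$ etc. denote specified non-overlapping occurrences. Tableaux: reduction rules ($\vee_-$) $G[B\vee C_-]$ $\mapsto$ two branches $G[B\vee C_-]\vee\sim B$, $G[B\vee C_-]\vee\sim C$; ($\epsilon_1$) $G[\epsilon ab_-]\mapsto G[\epsilon ab_-]\vee\sim\epsilon aa$; ($\epsilon_2$) $G[\epsilon ab_-,\epsilon bc_-]\mapsto G[\epsilon ab_-,\epsilon bc_-]\vee\sim\epsilon ac$; ($\epsilon_{3b}$) $G[\epsilon ab_-,\epsilon bb_-]\mapsto G[\epsilon ab_-,\epsilon bb_-]\vee\sim\epsilon ba$. A tableau for $A$ is a finite tree with root $A$ whose non-leaf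 nodes have as children the result of applying one rule. Hintikka formula: a formula $H$ such that (1) $H$ is not of the form $F[B_+,B_-]$; (2) if $B\vee C$ is a negative part of $H$ then $B$ or $C$ is; (3) if $\epsilon ab$ is a negative part then so is $\epsilon aa$; (4) if $\epsilon ab,\epsilon bc$ are negative parts then so is $\epsilon ac$; (5) if $\epsilon ab,\epsilon bb$ are negative parts then so is $\epsilon ba$. $\mathbf{HAR}$: fix a name variable $a_0$; $\dashv_H$ is the smallest set such that $\dashv_H\epsilon a_0a_0$; $\dashv_H\sim\epsilon a_0a_0$; if $\vdash_H A\supset B$ and $\dashv_H B$ then $\dashv_H A$; if $\dashv_H A$ and $A$ is obtained from $B$ by uniform substitution of name variables for name variables then $\dashv_H B$; if $A$ is a Hintikka formula that is a disjunction of atomic or negated atomic formulas, $\dashv_H A$, and $\epsilon ab$ is not a negative part of $A$, then $\dashv_H A\vee\epsilon ab$. Gentzen-type axiomatic rejection $\mathbf{GAR}$: $\dashv_T A$ means that there exists a tableau for $A$ at least one branch of which ends with a Hintikka formula. *)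

theory Defs
  imports Main "HOL-Library.Multiset"
begin

datatype fm = Eps nat nat | Or fm fm | Neg fm

definition And :: "fm \<Rightarrow> fm \<Rightarrow> fm" where
  "And A B = Neg (Or (Neg A) (Neg B))"
definition Imp :: "fm \<Rightarrow> fm \<Rightarrow> fm" where
  "Imp A B = Or (Neg A) B"
definition Iff :: "fm \<Rightarrow> fm \<Rightarrow> fm" where
  "Iff A B = And (Imp A B) (Imp B A)"

datatype pform = PVar nat | POr pform pform | PNeg pform

primrec peval :: "(nat \<Rightarrow> bool) \<Rightarrow> pform \<Rightarrow> bool" where
  "peval v (PVar n) = v n"
| "peval v (POr P Q) = (peval v P \<or> peval v Q)"
| "peval v (PNeg P) = (\<not> peval v P)"

definition ptaut :: "pform \<Rightarrow> bool" where
  "ptaut P = (\<forall>v. peval v P)"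

primrec inst :: "(nat \<Rightarrow> fm) \<Rightarrow> pform \<Rightarrow> fm" where
  "inst s (PVar n) = s n"
| "inst s (POr P Q) = Or (inst s P) (inst s Q)"
| "inst s (PNeg P) = Neg (inst s P)"

inductive thmH :: "fm \<Rightarrow> bool" where
  taut: "ptaut P \<Longrightarrow> thmH (inst s P)"
| ax1: "thmH (Imp (Eps a b) (Eps a a))"
| ax2: "thmH (Imp (And (Eps a b) (Eps b c)) (Eps a c))"
| ax3: "thmH (Imp (And (Eps a b) (Eps b b)) (Eps b a))"
| mp: "thmH (Imp A B) \<Longrightarrow> thmH A \<Longrightarrow> thmH B"

section \<open>Positive and negative parts, as a multiset of occurrences tagged with polarity
  (True = positive, False = negative)\<close>

fun parts :: "bool \<Rightarrow> fm \<Rightarrow> (bool \<times> fm) multiset" where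
  "parts p (Eps a b) = {#(p, Eps a b)#}"
| "parts p (Or B C) = add_mset (p, Or B C) (if p then parts p B + parts p C else {#})"
| "parts p (Neg B) = add_mset (p, Neg B) (parts (\<not> p) B)"

definition posp :: "fm \<Rightarrow> fm \<Rightarrow> bool" where
  "posp B A = ((True, B) \<in># parts True A)"
definition negp :: "fm \<Rightarrow> fm \<Rightarrow> bool" where
  "negp B A = ((False, B) \<in># parts True A)"

definition hintikka :: "fm \<Rightarrow> bool" where
  "hintikka H = (
     (\<nexists>B. posp B H \<and> negp B H) \<and>
     (\<forall>B C. negp (Or B C) H \<longrightarrow> negp B H \<or> negp C H) \<and>
     (\<forall>a b. negp (Eps a b) H \<longrightarrow> negp (Eps a a) H) \<and>
     (\<forall>a b c. negp (Eps a b) H \<and> negp (Eps b c) H \<longrightarrow> negp (Eps a c) H) \<and>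
     (\<forall>a b. negp (Eps a b) H \<and> negp (Eps b b) H \<longrightarrow> negp (Eps b a) H))"

text \<open>rule_app G Cs: applying one reduction rule to G yields the children Cs.
  Two specified occurrences must be non-overlapping, hence the sub-multiset condition.\<close>
definition rule_app :: "fm \<Rightarrow> fm list \<Rightarrow> bool" where
  "rule_app G Cs = (
     (\<exists>B C. negp (Or B C) G \<and> Cs = [Or G (Neg B), Or G (Neg C)]) \<or>
     (\<exists>a b. negp (Eps a b) G \<and> Cs = [Or G (Neg (Eps a a))]) \<or>
     (\<exists>a b c. {#(False, Eps a b), (False, Eps b c)#} \<subseteq># parts True G
              \<and> Cs = [Or G (Neg (Eps a c))]) \<or>
     (\<exists>a b. {#(False, Eps a b), (False, Eps b b)#} \<subseteq># parts True G
              \<and> Cs = [Or G (Neg (Eps b a))]))"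

datatype ttree = TNode fm "ttree list"

primrec troot :: "ttree \<Rightarrow> fm" where
  "troot (TNode G ts) = G"

inductive is_tableau :: "ttree \<Rightarrow> bool" where
  leaf: "is_tableau (TNode G [])"
| node: "rule_app G (map troot ts) \<Longrightarrow> \<forall>t\<in>set ts. is_tableau t \<Longrightarrow> is_tableau (TNode G ts)"

inductive hintikka_branch :: "ttree \<Rightarrow> bool" where
  leaf: "hintikka G \<Longrightarrow> hintikka_branch (TNode G [])"
| node: "t \<in> set ts \<Longrightarrow> hintikka_branch t \<Longrightarrow> hintikka_branch (TNode G ts)"

definition rejT :: "fm \<Rightarrow> bool" where
  "rejT A = (\<exists>T. is_tableau T \<and> troot T = A \<and> hintikka_branch T)"

primrec subst :: "(nat \<Rightarrow> nat) \<Rightarrow> fm \<Rightarrow> fm" where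
  "subst s (Eps a b) = Eps (s a) (s b)"
| "subst s (Or A B) = Or (subst s A) (subst s B)"
| "subst s (Neg A) = Neg (subst s A)"

inductive litdisj :: "fm \<Rightarrow> bool" where
  "litdisj (Eps a b)"
| "litdisj (Neg (Eps a b))"
| "litdisj A \<Longrightarrow> litdisj B \<Longrightarrow> litdisj (Or A B)"

inductive rejH :: "nat \<Rightarrow> fm \<Rightarrow> bool" for a0 :: nat where
  ax_pos: "rejH a0 (Eps a0 a0)"
| ax_neg: "rejH a0 (Neg (Eps a0 a0))"
| mt: "thmH (Imp A B) \<Longrightarrow> rejH a0 B \<Longrightarrow> rejH a0 A"
| sub: "rejH a0 A \<Longrightarrow> A = subst s B \<Longrightarrow> rejH a0 B"
| ext: "hintikka A \<Longrightarrow> litdisj A \<Longrightarrow> rejH a0 A \<Longrightarrow> \<not> negp (Eps a b) A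
        \<Longrightarrow> rejH a0 (Or A (Eps a b))"

end

theory Submission imports Defs "HOL-Library.Nat_Bijection" begin

fun eval :: "(nat \<Rightarrow> nat \<Rightarrow> bool) \<Rightarrow> fm \<Rightarrow> bool" where
  "eval e (Eps a b) = e a b"
| "eval e (Or A B) = (eval e A \<or> eval e B)"
| "eval e (Neg A) = (\<not> eval e A)"

lemma eval_Imp[simp]: "eval e (Imp A B) = (eval e A \<longrightarrow> eval e B)" by (simp add: Imp_def)
lemma eval_And[simp]: "eval e (And A B) = (eval e A \<and> eval e B)" by (simp add: And_def)

definition closed :: "(nat \<Rightarrow> nat \<Rightarrow> bool) \<Rightarrow> bool" where
  "closed e = ((\<forall>a b. e a b \<longrightarrow> e a a) \<and> (\<forall>a b c. e a b \<and> e b c \<longrightarrow> e a c)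
     \<and> (\<forall>a b. e a b \<and> e b b \<longrightarrow> e b a))"

lemma closedI: "(\<And>a b. e a b \<Longrightarrow> e a a) \<Longrightarrow> (\<And>a b c. e a b \<Longrightarrow> e b c \<Longrightarrow> e a c)
  \<Longrightarrow> (\<And>a b. e a b \<Longrightarrow> e b b \<Longrightarrow> e b a) \<Longrightarrow> closed e"
  unfolding closed_def by blast
lemma closedD1: "closed e \<Longrightarrow> e a b \<Longrightarrow> e a a" unfolding closed_def by blast
lemma closedD2: "closed e \<Longrightarrow> e a b \<Longrightarrow> e b c \<Longrightarrow> e a c" unfolding closed_def by blast
lemma closedD3: "closed e \<Longrightarrow> e a b \<Longrightarrow> e b b \<Longrightarrow> e b a" unfolding closed_def by blast

definition valid :: "fm \<Rightarrow> bool" where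
  "valid A = (\<forall>e. closed e \<longrightarrow> eval e A)"

primrec tr :: "fm \<Rightarrow> pform" where
  "tr (Eps a b) = PVar (prod_encode (a,b))"
| "tr (Or A B) = POr (tr A) (tr B)"
| "tr (Neg A) = PNeg (tr A)"

lemma inst_tr: "inst (\<lambda>n. case prod_decode n of (a,b) \<Rightarrow> Eps a b) (tr X) = X"
  by (induction X) (simp_all add: prod_encode_inverse)

lemma peval_tr: "peval v (tr X) = eval (\<lambda>a b. v (prod_encode (a,b))) X"
  by (induction X) simp_all

lemma taut_thmH: "(\<And>e. eval e X) \<Longrightarrow> thmH X"
proof -
  assume h: "\<And>e. eval e X"
  have "ptaut (tr X)" unfolding ptaut_def using h by (simp add: peval_tr)
  from thmH.taut[OF this, of "\<lambda>n. case prod_decode n of (a,b) \<Rightarrow> Eps a b"] show ?thesis by (simp only: inst_tr)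
qed

lemma thmH_mpv: "thmH A \<Longrightarrow> (\<And>e. eval e A \<Longrightarrow> eval e B) \<Longrightarrow> thmH B"
  by (metis eval_Imp taut_thmH thmH.mp)

lemma thmH_And: "thmH A \<Longrightarrow> thmH B \<Longrightarrow> thmH (And A B)"
proof -
  assume a: "thmH A" and b: "thmH B"
  have "thmH (Imp A (Imp B (And A B)))" by (rule taut_thmH) simp
  then show ?thesis using a b thmH.mp by blast
qed

lemma eval_inst: "eval e (inst s P) = peval (\<lambda>n. eval e (s n)) P"
  by (induction P) simp_all

lemma thmH_sound: "thmH X \<Longrightarrow> closed e \<Longrightarrow> eval e X"
proof (induction rule: thmH.induct)
  case (taut P s) then show ?case by (simp add: eval_inst ptaut_def)
next
  case (ax1 a b) then show ?case using closedD1 closedD2 closedD3 by (simp only: eval_Imp eval_And eval.simps) metis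
next
  case (ax2 a b c) then show ?case using closedD1 closedD2 closedD3 by (simp only: eval_Imp eval_And eval.simps) metis
next
  case (ax3 a b) then show ?case using closedD1 closedD2 closedD3 by (simp only: eval_Imp eval_And eval.simps) metis
next
  case (mp A B) then show ?case by simp
qed

primrec names :: "fm \<Rightarrow> nat set" where
  "names (Eps a b) = {a,b}"
| "names (Or A B) = names A \<union> names B"
| "names (Neg A) = names A"

lemma finite_names: "finite (names X)" by (induction X) auto
lemma names_ne: "names X \<noteq> {}" by (induction X) auto

lemma eval_cong: "(\<And>a b. a \<in> names X \<Longrightarrow> b \<in> names X \<Longrightarrow> e a b = e' a b) \<Longrightarrow> eval e X = eval e' X"
  by (induction X) auto

primrec conjl :: "fm list \<Rightarrow> fm" where
  "conjl [] = Imp (Eps 0 0) (Eps 0 0)"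
| "conjl (x#xs) = And x (conjl xs)"

lemma eval_conjl: "eval e (conjl xs) = (\<forall>x\<in>set xs. eval e x)"
  by (induction xs) auto

lemma thmH_conjl: "(\<forall>x\<in>set xs. thmH x) \<Longrightarrow> thmH (conjl xs)"
proof (induction xs)
  case Nil then show ?case by (simp add: taut_thmH)
next
  case (Cons x xs) then show ?case by (simp add: thmH_And)
qed

definition axl :: "nat list \<Rightarrow> fm list" where
  "axl ns = map (\<lambda>(a,b). Imp (Eps a b) (Eps a a)) (List.product ns ns)
     @ map (\<lambda>(a,b,c). Imp (And (Eps a b) (Eps b c)) (Eps a c)) (List.product ns (List.product ns ns))
     @ map (\<lambda>(a,b). Imp (And (Eps a b) (Eps b b)) (Eps b a)) (List.product ns ns)"

lemma thmH_axl: "thmH (conjl (axl ns))"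
  by (rule thmH_conjl) (auto simp: axl_def intro: thmH.intros)

lemma completeness: assumes "valid X" shows "thmH X"
proof -
  obtain ns where ns: "set ns = names X" using finite_list[OF finite_names] by blast
  have "eval e X" if h: "eval e (conjl (axl ns))" for e
  proof -
    define e' where "e' a b = (e a b \<and> a \<in> names X \<and> b \<in> names X)" for a b
    have ax: "\<forall>x\<in>set (axl ns). eval e x" using h by (simp add: eval_conjl)
    have "closed e'"
    proof (rule closedI)
      fix a b assume "e' a b"
      then show "e' a a" using ax ns by (force simp: axl_def e'_def)
    next
      fix a b c assume "e' a b" "e' b c"
      then show "e' a c" using ax ns by (force simp: axl_def e'_def)
    next
      fix a b assume "e' a b" "e' b b"
      then show "e' b a" using ax ns by (force simp: axl_def e'_def)
    qed
    then have "eval e' X" using assms valid_def by blast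
    moreover have "eval e' X = eval e X" by (rule eval_cong) (simp add: e'_def)
    ultimately show ?thesis by simp
  qed
  then show ?thesis using thmH_mpv[OF thmH_axl] by blast
qed


lemma parts_self: "(p, X) \<in># parts p X"
  by (cases X) auto

lemma parts_trans: "(r,Y) \<in># parts p X \<Longrightarrow> (p,X) \<in># parts q H \<Longrightarrow> (r,Y) \<in># parts q H"
proof (induction H arbitrary: q)
  case (Eps a b) then show ?case by auto
next
  case (Or B C) then show ?case by (auto split: if_splits)
next
  case (Neg B) then show ?case by auto
qed

definition val :: "(nat \<Rightarrow> nat \<Rightarrow> bool) \<Rightarrow> bool \<Rightarrow> fm \<Rightarrow> bool" where
  "val e p X = (if p then \<not> eval e X else eval e X)"

lemma parts_val: "val e q H \<Longrightarrow> (p,X) \<in># parts q H \<Longrightarrow> val e p X"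
proof (induction H arbitrary: q)
  case (Eps a b) then show ?case by auto
next
  case (Or B C) then show ?case using Or.IH(1)[of True] Or.IH(2)[of True]
    by (auto split: if_splits simp: val_def)
next
  case (Neg B)
  then have "val e (\<not> q) B" by (auto simp: val_def)
  then show ?case using Neg by auto
qed

lemma hintD:
  assumes "hintikka H"
  shows "\<not> (posp B H \<and> negp B H)"
    "negp (Or B C) H \<Longrightarrow> negp B H \<or> negp C H"
    "negp (Eps a b) H \<Longrightarrow> negp (Eps a a) H"
    "negp (Eps a b) H \<Longrightarrow> negp (Eps b c) H \<Longrightarrow> negp (Eps a c) H"
    "negp (Eps a b) H \<Longrightarrow> negp (Eps b b) H \<Longrightarrow> negp (Eps b a) H"
  using assms unfolding hintikka_def by blast+

lemma hintikkaI:
  assumes "\<And>B. \<not> (posp B H \<and> negp B H)"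
    "\<And>B C. negp (Or B C) H \<Longrightarrow> negp B H \<or> negp C H"
    "\<And>a b. negp (Eps a b) H \<Longrightarrow> negp (Eps a a) H"
    "\<And>a b c. negp (Eps a b) H \<Longrightarrow> negp (Eps b c) H \<Longrightarrow> negp (Eps a c) H"
    "\<And>a b. negp (Eps a b) H \<Longrightarrow> negp (Eps b b) H \<Longrightarrow> negp (Eps b a) H"
  shows "hintikka H"
  unfolding hintikka_def using assms by blast

lemma not_hint:
  assumes "\<not> hintikka H" "\<And>B. \<not> (posp B H \<and> negp B H)"
  shows "(\<exists>B C. negp (Or B C) H \<and> \<not> negp B H \<and> \<not> negp C H) \<or>
    (\<exists>a b. negp (Eps a b) H \<and> \<not> negp (Eps a a) H) \<or>
    (\<exists>a b c. negp (Eps a b) H \<and> negp (Eps b c) H \<and> \<not> negp (Eps a c) H) \<or>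
    (\<exists>a b. negp (Eps a b) H \<and> negp (Eps b b) H \<and> \<not> negp (Eps b a) H)"
proof (rule ccontr)
  assume n: "\<not> ?thesis"
  have "hintikka H"
  proof (rule hintikkaI)
    show "\<And>B. \<not> (posp B H \<and> negp B H)" by (rule assms(2))
  qed (use n in blast)+
  then show False using assms(1) by blast
qed

lemma hint_false:
  assumes "hintikka H"
  shows "closed (\<lambda>a b. negp (Eps a b) H) \<and> \<not> eval (\<lambda>a b. negp (Eps a b) H) H"
proof -
  define e where "e = (\<lambda>a b. negp (Eps a b) H)"
  have pn: "(posp X H \<longrightarrow> \<not> eval e X) \<and> (negp X H \<longrightarrow> eval e X)" for X
  proof (induction X)
    case (Eps a b) then show ?case using hintD(1)[OF assms, of \<open>Eps a b\<close>] by (simp add: e_def)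
  next
    case (Or B C)
    have "(True,B) \<in># parts True (Or B C)" "(True,C) \<in># parts True (Or B C)"
      by (simp_all add: parts_self)
    then have "posp (Or B C) H \<Longrightarrow> posp B H \<and> posp C H"
      unfolding posp_def using parts_trans by blast
    moreover have "negp (Or B C) H \<Longrightarrow> negp B H \<or> negp C H"
      using hintD(2)[OF assms] by blast
    ultimately show ?case using Or by auto
  next
    case (Neg B)
    have "(False,B) \<in># parts True (Neg B)" "(True,B) \<in># parts False (Neg B)"
      by (simp_all add: parts_self)
    then have "posp (Neg B) H \<Longrightarrow> negp B H" "negp (Neg B) H \<Longrightarrow> posp B H"
      unfolding posp_def negp_def using parts_trans by blast+
    then show ?case using Neg by auto
  qed
  have "posp H H" by (simp add: posp_def parts_self)
  then have "\<not> eval e H" using pn by blast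
  moreover have "closed e" unfolding e_def by (rule closedI) (use hintD[OF assms] in blast)+
  ultimately show ?thesis by (simp add: e_def)
qed

lemma eval_subst: "eval e (subst s X) = eval (\<lambda>a b. e (s a) (s b)) X"
  by (induction X) auto

lemma rejH_sound: "rejH a0 A \<Longrightarrow> \<not> valid A"
proof (induction rule: rejH.induct)
  case ax_pos
  have "closed (\<lambda>a b. False)" by (rule closedI) auto
  then show ?case by (auto simp: valid_def)
next
  case ax_neg
  have "closed (\<lambda>a b. True)" by (rule closedI) auto
  then show ?case by (auto simp: valid_def)
next
  case (mt A B)
  then show ?case using thmH_sound by (fastforce simp: valid_def)
next
  case (sub A s B)
  then obtain e where "closed e" "\<not> eval e A" by (auto simp: valid_def)
  moreover have "closed (\<lambda>a b. e (s a) (s b))" by (rule closedI) (use \<open>closed e\<close> closedD1 closedD2 closedD3 in blast)+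
  ultimately show ?case using sub by (auto simp: valid_def eval_subst)
next
  case (ext A a b)
  then show ?case using hint_false[OF ext(1)] by (auto simp: valid_def)
qed

lemma rule_app_child: "rule_app G Cs \<Longrightarrow> C \<in> set Cs \<Longrightarrow> \<exists>X. C = Or G (Neg X)"
  unfolding rule_app_def by auto

lemma rejT_sound_aux: "hintikka_branch T \<Longrightarrow> is_tableau T \<Longrightarrow> \<not> valid (troot T)"
proof (induction rule: hintikka_branch.induct)
  case (leaf G) then show ?case using hint_false by (auto simp: valid_def)
next
  case (node t ts G)
  from node.prems have ra: "rule_app G (map troot ts)" and "is_tableau t"
    using node.hyps(1) by (auto elim: is_tableau.cases)
  then have "\<not> valid (troot t)" using node.IH by blast
  moreover obtain X where "troot t = Or G (Neg X)"
    using rule_app_child[OF ra] node.hyps(1) by auto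
  ultimately show ?case by (auto simp: valid_def)
qed

lemma rejT_sound: "rejT A \<Longrightarrow> \<not> valid A"
  unfolding rejT_def using rejT_sound_aux by blast


primrec subf :: "fm \<Rightarrow> fm set" where
  "subf (Eps a b) = {Eps a b}"
| "subf (Or B C) = insert (Or B C) (subf B \<union> subf C)"
| "subf (Neg B) = insert (Neg B) (subf B)"

lemma finite_subf: "finite (subf X)" by (induction X) auto

lemma parts_subf: "(p,Y) \<in># parts q B \<Longrightarrow> Y \<in> subf B"
  by (induction B arbitrary: q) (auto split: if_splits)

lemma subf_self: "X \<in> subf X" by (cases X) auto

lemma subf_trans: "B \<in> subf A \<Longrightarrow> subf B \<subseteq> subf A"
  by (induction A) auto

lemma subf_names: "Y \<in> subf A \<Longrightarrow> names Y \<subseteq> names A"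
  by (induction A) auto

definition UU :: "fm \<Rightarrow> fm set" where
  "UU A = subf A \<union> (\<lambda>(x,y). Eps x y) ` (names A \<times> names A)"

lemma finite_UU: "finite (UU A)"
  unfolding UU_def using finite_subf finite_names by auto

lemma UU_closed: assumes "B \<in> UU A" "(p,Y) \<in># parts q B" shows "Y \<in> UU A"
proof (cases "B \<in> subf A")
  case True then have "Y \<in> subf A" using parts_subf[OF assms(2)] subf_trans by blast
  then show ?thesis by (simp add: UU_def)
next
  case False then obtain x y where "B = Eps x y" "x \<in> names A" "y \<in> names A"
    using assms(1) by (auto simp: UU_def)
  then show ?thesis using assms(2) by (auto simp: UU_def)
qed

lemma UU_or: assumes "Or B C \<in> UU A" shows "B \<in> UU A \<and> C \<in> UU A"
proof -
  have "Or B C \<in> subf A" using assms by (auto simp: UU_def)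
  then have "subf (Or B C) \<subseteq> subf A" by (rule subf_trans)
  then show ?thesis using subf_self[of B] subf_self[of C] by (auto simp: UU_def)
qed

lemma UU_eps: "Eps a b \<in> UU A \<longleftrightarrow> a \<in> names A \<and> b \<in> names A"
  unfolding UU_def using subf_names by fastforce

lemma negp_child: "negp Y (Or G (Neg B)) \<longleftrightarrow> negp Y G \<or> (False, Y) \<in># parts False B"
  by (auto simp: negp_def)

lemma child_ok:
  assumes "{Y. negp Y G} \<subseteq> UU A" "B \<in> UU A" "\<not> negp B G"
  shows "{Y. negp Y (Or G (Neg B))} \<subseteq> UU A \<and>
         card (UU A - {Y. negp Y (Or G (Neg B))}) < card (UU A - {Y. negp Y G})"
proof
  show "{Y. negp Y (Or G (Neg B))} \<subseteq> UU A"
    using assms(1,2) UU_closed by (auto simp: negp_child)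
  have "UU A - {Y. negp Y (Or G (Neg B))} \<subset> UU A - {Y. negp Y G}"
  proof
    show "UU A - {Y. negp Y (Or G (Neg B))} \<subseteq> UU A - {Y. negp Y G}"
      by (auto simp: negp_child)
    have "negp B (Or G (Neg B))" by (simp add: negp_child parts_self)
    then show "UU A - {Y. negp Y (Or G (Neg B))} \<noteq> UU A - {Y. negp Y G}"
      using assms(2,3) by blast
  qed
  then show "card (UU A - {Y. negp Y (Or G (Neg B))}) < card (UU A - {Y. negp Y G})"
    by (meson finite_Diff finite_UU psubset_card_mono)
qed

lemma two_sub: "x \<noteq> y \<Longrightarrow> x \<in># M \<Longrightarrow> y \<in># M \<Longrightarrow> {#x, y#} \<subseteq># M"
proof -
  assume a: "x \<noteq> y" "x \<in># M" "y \<in># M"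
  from a(2) obtain M' where M: "M = add_mset x M'" by (blast dest: multi_member_split)
  then have "y \<in># M'" using a by simp
  then show ?thesis by (simp add: M)
qed

lemma neg_true: "\<not> eval e G \<Longrightarrow> negp B G \<Longrightarrow> eval e B"
  using parts_val[of e True G False B] by (simp add: val_def negp_def)

lemma pos_false: "\<not> eval e G \<Longrightarrow> posp B G \<Longrightarrow> \<not> eval e B"
  using parts_val[of e True G True B] by (simp add: val_def posp_def)

lemma single_child:
  assumes "rule_app G [Or G (Neg B)]"
     and "\<exists>T. is_tableau T \<and> troot T = Or G (Neg B) \<and> hintikka_branch T"
  shows "\<exists>T. is_tableau T \<and> troot T = G \<and> hintikka_branch T"
proof -
  obtain T where T: "is_tableau T" "troot T = Or G (Neg B)" "hintikka_branch T" using assms(2) by blast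
  have "is_tableau (TNode G [T])" using assms(1) T by (auto intro: is_tableau.node)
  moreover have "hintikka_branch (TNode G [T])" using T by (auto intro: hintikka_branch.node)
  ultimately show ?thesis by force
qed

lemma tab_exists_aux:
  "\<forall>G. card (UU A - {B. negp B G}) = m \<longrightarrow> {B. negp B G} \<subseteq> UU A \<longrightarrow> \<not> eval e G \<longrightarrow> closed e
     \<longrightarrow> (\<exists>T. is_tableau T \<and> troot T = G \<and> hintikka_branch T)"
proof (induction m rule: less_induct)
  case (less m)
  show ?case
  proof (intro allI impI)
    fix G assume m: "card (UU A - {B. negp B G}) = m" and sub: "{B. negp B G} \<subseteq> UU A"
      and fe: "\<not> eval e G" and ce: "closed e"
    have IH: "\<exists>T. is_tableau T \<and> troot T = Or G (Neg B) \<and> hintikka_branch T"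
      if "B \<in> UU A" "\<not> negp B G" "eval e B" for B
    proof -
      from child_ok[OF sub that(1,2)] m less.IH fe that(3) ce show ?thesis by auto
    qed
    show "\<exists>T. is_tableau T \<and> troot T = G \<and> hintikka_branch T"
    proof (cases "hintikka G")
      case True
      then show ?thesis by (auto intro: is_tableau.leaf hintikka_branch.leaf exI[of _ "TNode G []"])
    next
      case False
      have c1: "\<nexists>B. posp B G \<and> negp B G" using fe neg_true pos_false by blast
      from not_hint[OF False] c1 consider
        (c2) B C where "negp (Or B C) G" "\<not> negp B G" "\<not> negp C G"
      | (c3) a b where "negp (Eps a b) G" "\<not> negp (Eps a a) G"
      | (c4) a b c where "negp (Eps a b) G" "negp (Eps b c) G" "\<not> negp (Eps a c) G"
      | (c5) a b where "negp (Eps a b) G" "negp (Eps b b) G" "\<not> negp (Eps b a) G"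
        by blast
      then show ?thesis
      proof cases
        case c2
        have "Or B C \<in> UU A" using c2(1) sub by blast
        then have BU: "B \<in> UU A" "C \<in> UU A" using UU_or by blast+
        have ra: "rule_app G [Or G (Neg B), Or G (Neg C)]" using c2 by (auto simp: rule_app_def)
        have "eval e B \<or> eval e C" using neg_true[OF fe c2(1)] by simp
        then show ?thesis
        proof
          assume "eval e B"
          then obtain T where T: "is_tableau T" "troot T = Or G (Neg B)" "hintikka_branch T"
            using IH BU c2 by blast
          let ?T = "TNode G [T, TNode (Or G (Neg C)) []]"
          have "is_tableau ?T" using ra T by (auto intro!: is_tableau.node is_tableau.leaf)
          moreover have "hintikka_branch ?T" using T by (auto intro: hintikka_branch.node)
          ultimately show ?thesis by force
        next
          assume "eval e C"
          then obtain T where T: "is_tableau T" "troot T = Or G (Neg C)" "hintikka_branch T"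
            using IH BU c2 by blast
          let ?T = "TNode G [TNode (Or G (Neg B)) [], T]"
          have "is_tableau ?T" using ra T by (auto intro!: is_tableau.node is_tableau.leaf)
          moreover have "hintikka_branch ?T" using T by (auto intro: hintikka_branch.node)
          ultimately show ?thesis by force
        qed
      next
        case c3
        have "Eps a b \<in> UU A" using c3 sub by auto
        then have U: "Eps a a \<in> UU A" by (simp add: UU_eps)
        have "eval e (Eps a a)" using closedD1[OF ce, of a b] neg_true[OF fe c3(1)] by simp
        then show ?thesis using IH[OF U c3(2)] c3 by (intro single_child) (auto simp: rule_app_def)
      next
        case c4
        have "Eps a b \<in> UU A" "Eps b c \<in> UU A" using c4 sub by auto
        then have U: "Eps a c \<in> UU A" by (simp add: UU_eps)
        have "eval e (Eps a c)" using closedD2[OF ce] neg_true[OF fe c4(1)] neg_true[OF fe c4(2)]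
          by simp
        moreover have "Eps a b \<noteq> Eps b c" using c4 by auto
        then have "{#(False, Eps a b), (False, Eps b c)#} \<subseteq># parts True G"
          using c4 by (intro two_sub) (auto simp: negp_def)
        ultimately show ?thesis using IH[OF U c4(3)]
          by (intro single_child) (auto simp: rule_app_def)
      next
        case c5
        have "Eps a b \<in> UU A" using c5 sub by auto
        then have U: "Eps b a \<in> UU A" by (simp add: UU_eps)
        have "eval e (Eps b a)" using closedD3[OF ce] neg_true[OF fe c5(1)] neg_true[OF fe c5(2)]
          by simp
        moreover have "Eps a b \<noteq> Eps b b" using c5 by auto
        then have "{#(False, Eps a b), (False, Eps b b)#} \<subseteq># parts True G"
          using c5 by (intro two_sub) (auto simp: negp_def)
        ultimately show ?thesis using IH[OF U c5(3)]
          by (intro single_child) (auto simp: rule_app_def)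
      qed
    qed
  qed
qed

lemma rejT_complete: "\<not> valid A \<Longrightarrow> rejT A"
proof -
  assume "\<not> valid A"
  then obtain e where e: "closed e" "\<not> eval e A" by (auto simp: valid_def)
  have "{B. negp B A} \<subseteq> UU A" unfolding UU_def negp_def using parts_subf by auto
  then show ?thesis unfolding rejT_def using tab_exists_aux e by blast
qed


fun disj :: "fm list \<Rightarrow> fm" where
  "disj [] = Eps 0 0"
| "disj (x#xs) = foldl Or x xs"

lemma disj_snoc: "L \<noteq> [] \<Longrightarrow> disj (L @ [y]) = Or (disj L) y"
  by (cases L) auto

lemma eval_disj: "L \<noteq> [] \<Longrightarrow> eval e (disj L) = (\<exists>l\<in>set L. eval e l)"
proof (induction L rule: rev_induct)
  case (snoc y L) then show ?case by (cases "L = []") (auto simp: disj_snoc)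
qed simp

lemma subst_foldl: "subst s (foldl Or x xs) = foldl Or (subst s x) (map (subst s) xs)"
  by (induction xs arbitrary: x) auto

lemma subst_disj: "L \<noteq> [] \<Longrightarrow> subst s (disj L) = disj (map (subst s) L)"
  by (cases L) (auto simp: subst_foldl)

definition lit :: "fm \<Rightarrow> bool" where
  "lit y = (\<exists>a b. y = Eps a b \<or> y = Neg (Eps a b))"

lemma parts_disj:
  "L \<noteq> [] \<Longrightarrow> \<forall>l\<in>set L. lit l \<Longrightarrow>
    (negp B (disj L) \<longleftrightarrow> Neg B \<in> set L) \<and> (posp (Eps a b) (disj L) \<longleftrightarrow> Eps a b \<in> set L)"
proof (induction L rule: rev_induct)
  case Nil then show ?case by simp
next
  case (snoc y L)
  have ly: "lit y" using snoc by auto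
  show ?case
  proof (cases "L = []")
    case True
    then show ?thesis using ly by (auto simp: lit_def negp_def posp_def)
  next
    case False
    then show ?thesis using snoc ly by (auto simp: disj_snoc lit_def negp_def posp_def)
  qed
qed

lemma litdisj_disj: "L \<noteq> [] \<Longrightarrow> \<forall>l\<in>set L. lit l \<Longrightarrow> litdisj (disj L)"
proof (induction L rule: rev_induct)
  case (snoc y L)
  have "litdisj y" using snoc by (auto simp: lit_def intro: litdisj.intros)
  then show ?case using snoc by (cases "L = []") (auto simp: disj_snoc intro: litdisj.intros)
qed simp

lemma hint_disj:
  assumes "L \<noteq> []" "\<forall>l\<in>set L. lit l"
    and "\<And>a b. Neg (Eps a b) \<in> set L \<Longrightarrow> Eps a b \<notin> set L"
    and "closed (\<lambda>a b. Neg (Eps a b) \<in> set L)"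
  shows "hintikka (disj L)"
proof -
  note pd = parts_disj[OF assms(1,2)]
  have n: "negp B (disj L) \<Longrightarrow> \<exists>a b. B = Eps a b \<and> Neg (Eps a b) \<in> set L" for B
    using pd assms(2) by (fastforce simp: lit_def)
  show ?thesis
  proof (rule hintikkaI)
    show "\<not> (posp B (disj L) \<and> negp B (disj L))" for B
      using n pd assms(3) by blast
  next
    fix B C assume "negp (Or B C) (disj L)" then show "negp B (disj L) \<or> negp C (disj L)"
      using n by blast
  next
    fix a b assume "negp (Eps a b) (disj L)" then show "negp (Eps a a) (disj L)"
      using pd closedD1[OF assms(4)] by simp
  next
    fix a b c assume "negp (Eps a b) (disj L)" "negp (Eps b c) (disj L)" then show "negp (Eps a c) (disj L)"
      using pd closedD2[OF assms(4)] by simp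
  next
    fix a b assume "negp (Eps a b) (disj L)" "negp (Eps b b) (disj L)" then show "negp (Eps b a) (disj L)"
      using pd closedD3[OF assms(4)] by simp
  qed
qed

lemma rej_same:
  assumes "L \<noteq> []" and "(\<forall>l\<in>set L. \<exists>a b. l = Eps a b) \<or> (\<forall>l\<in>set L. \<exists>a b. l = Neg (Eps a b))"
  shows "rejH a0 (disj L)"
proof -
  let ?s = "\<lambda>_::nat. a0"
  have ne: "map (subst ?s) L \<noteq> []" using assms(1) by simp
  from assms(2) show ?thesis
  proof
    assume h: "\<forall>l\<in>set L. \<exists>a b. l = Eps a b"
    have "thmH (Imp (disj (map (subst ?s) L)) (Eps a0 a0))"
      by (rule taut_thmH) (use h in \<open>auto simp: eval_disj[OF ne]\<close>)
    then have "rejH a0 (disj (map (subst ?s) L))" using rejH.mt rejH.ax_pos by blast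
    then show ?thesis using rejH.sub subst_disj[OF assms(1)] by metis
  next
    assume h: "\<forall>l\<in>set L. \<exists>a b. l = Neg (Eps a b)"
    have "thmH (Imp (disj (map (subst ?s) L)) (Neg (Eps a0 a0)))"
      by (rule taut_thmH) (use h in \<open>auto simp: eval_disj[OF ne]\<close>)
    then have "rejH a0 (disj (map (subst ?s) L))" using rejH.mt rejH.ax_neg by blast
    then show ?thesis using rejH.sub subst_disj[OF assms(1)] by metis
  qed
qed

lemma rejH_complete: assumes "\<not> valid A" shows "rejH a0 A"
proof -
  from assms obtain e where ce: "closed e" and fe: "\<not> eval e A" by (auto simp: valid_def)
  obtain ns where ns: "set ns = names A" using finite_list[OF finite_names] by blast
  define N where "N = names A"
  define pairs where "pairs = List.product ns ns"
  define negs where "negs = map (\<lambda>(x,y). Neg (Eps x y)) (filter (\<lambda>(x,y). e x y) pairs)"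
  define poss where "poss = map (\<lambda>(x,y). Eps x y) (filter (\<lambda>(x,y). \<not> e x y) pairs)"
  have sp: "set pairs = N \<times> N" using ns by (simp add: pairs_def N_def)
  have nN: "N \<noteq> {}" using names_ne N_def by simp
  have negs_iff: "Neg (Eps a b) \<in> set negs \<longleftrightarrow> a \<in> N \<and> b \<in> N \<and> e a b" for a b
    using sp by (auto simp: negs_def)
  have poss_iff: "Eps a b \<in> set poss \<longleftrightarrow> a \<in> N \<and> b \<in> N \<and> \<not> e a b" for a b
    using sp by (auto simp: poss_def)
  have negs_form: "\<forall>l\<in>set negs. \<exists>a b. l = Neg (Eps a b)" by (auto simp: negs_def)
  have poss_form: "\<forall>l\<in>set poss. \<exists>a b. l = Eps a b" by (auto simp: poss_def)
  have ne: "negs @ poss \<noteq> []"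
  proof -
    obtain x where "x \<in> N" using nN by blast
    then show ?thesis using negs_iff[of x x] poss_iff[of x x] by (cases "e x x") auto
  qed
  have "valid (Imp A (disj (negs @ poss)))"
    unfolding valid_def
  proof (intro allI impI)
    fix e' assume ce': "closed e'"
    show "eval e' (Imp A (disj (negs @ poss)))"
    proof (cases "eval e' (disj (negs @ poss))")
      case False
      then have nl: "\<forall>l\<in>set (negs @ poss). \<not> eval e' l" by (simp add: eval_disj[OF ne])
      have "e' a b = e a b" if "a \<in> N" "b \<in> N" for a b
      proof (cases "e a b")
        case True
        then have "Neg (Eps a b) \<in> set (negs @ poss)" using negs_iff[of a b] that by simp
        then have "\<not> eval e' (Neg (Eps a b))" using nl by blast
        then show ?thesis using True by simp
      next
        case False
        then have "Eps a b \<in> set (negs @ poss)" using poss_iff[of a b] that by simp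
        then have "\<not> eval e' (Eps a b)" using nl by blast
        then show ?thesis using False by simp
      qed
      then have "eval e' A = eval e A" by (intro eval_cong) (auto simp: N_def)
      then show ?thesis using fe by simp
    qed simp
  qed
  then have thmA: "thmH (Imp A (disj (negs @ poss)))" by (rule completeness)
  have lits: "\<forall>l\<in>set (negs @ poss). lit l" using negs_form poss_form by (auto simp: lit_def)
  have "rejH a0 (disj (negs @ poss))"
  proof (cases "negs = []")
    case True
    then show ?thesis using rej_same[of poss a0] ne poss_form by simp
  next
    case False
    have "set qs \<subseteq> set poss \<Longrightarrow> rejH a0 (disj (negs @ qs))" for qs
    proof (induction qs rule: rev_induct)
      case Nil then show ?case using rej_same[of negs a0] False negs_form by simp
    next
      case (snoc q qs)
      then have IH: "rejH a0 (disj (negs @ qs))" by simp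
      obtain a b where q: "q = Eps a b" "a \<in> N" "b \<in> N" "\<not> e a b"
        using snoc.prems poss_form poss_iff by auto
      let ?L = "negs @ qs"
      have Lne: "?L \<noteq> []" using False by simp
      have Llit: "\<forall>l\<in>set ?L. lit l" using lits snoc.prems by auto
      have nq: "Neg (Eps c d) \<in> set ?L \<longleftrightarrow> Neg (Eps c d) \<in> set negs" for c d
        using snoc.prems poss_form by auto
      have pq: "Eps c d \<in> set ?L \<Longrightarrow> \<not> e c d" for c d
        using snoc.prems poss_iff negs_form by auto
      have hL: "hintikka (disj ?L)"
      proof (rule hint_disj[OF Lne Llit])
        show "\<And>c d. Neg (Eps c d) \<in> set ?L \<Longrightarrow> Eps c d \<notin> set ?L" using nq negs_iff pq by blast
        show "closed (\<lambda>c d. Neg (Eps c d) \<in> set ?L)" unfolding nq negs_iff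
          by (rule closedI) (use closedD1[OF ce] closedD2[OF ce] closedD3[OF ce] in blast)+
      qed
      have "\<not> negp (Eps a b) (disj ?L)" using parts_disj[OF Lne Llit, of "Eps a b" a b] nq[of a b] negs_iff[of a b] q by simp
      then have "rejH a0 (Or (disj ?L) (Eps a b))"
        using rejH.ext[OF hL litdisj_disj[OF Lne Llit] IH] by blast
      then show ?case using disj_snoc[OF Lne, of q] q(1) by simp
    qed
    then show ?thesis by simp
  qed
  then show ?thesis using rejH.mt thmA by blast
qed

theorem theorem8p2:
  fixes a0 :: nat and A :: fm
  shows "rejH a0 A \<longleftrightarrow> rejT A"
  using rejH_sound rejH_complete rejT_sound rejT_complete by blast

end
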